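(* Let $k$ be a field and let $\nu$ be the valuation on $k[x,y]$ given by $\nu(p)=\operatorname{ord}_t\, p\!\left(t,\sum_{i=1}^\infty t^{i^2}\right)$, the $t$-adic order of the power series obtained by substituting $x\mapsto t$, $y\mapsto t+t^4+t^9+t^{16}+\cdots$. Then $\nu$ is centered on $k[x,y]$, the set $\mathbf{Q}=\{x\}$ satisfies (GS3), but $\mathbf{Q}=\{x\}$ does not satisfy (GS2). In particular, the converse of the implication (GS2) $\Rightarrow$ (GS3) fails in general.
   Context: The substitution homomorphism $k[x,y]\to k[[t]]$, $x\mapsto t$, $y\mapsto\sum_{i\ge1}t^{i^2}$, is injective (the series is transcendental over $k(t)$), so $\nu$ is a valuation with $\nu(k^\times)=0$ and $\nu(t)=1$. For a valuation $\nu$ on a ring $R$ with values in $\Gamma\cup\{\infty\}$: $\nu(R)$ is its set of finite values; for $\gamma\in\nu(R)$, $\mathcal P_\gamma=\{f\mid\nu(f)\ge\gamma\}$, $\mathcal P_\gamma^+=\{f\mid\nu(f)>\gamma\}$; $\mathrm{gr}_\nu(R)=\bigoplus_{\gamma}\mathcal P_\gamma/\mathcal P_\gamma^+$ with multiplication induced by that of $R$; $\mathrm{in}_\nu(f)$ is the image of $f$ in $\mathcal P_{\nu(f)}/\mathcal P_{\nu(f)}^+$. $\nu$ is centered if $\nu\ge0$ on $R$; then $\mathfrak m=\{\nu>0\}$ and $\mathrm{gr}_\nu(R)$ is an $R/\mathfrak m$-algebra. For $\mathbf{Q}\subseteq R$, $\mathbf{Q}^\lambda=\prod Q^{\lambda(Q)}$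 for finitely supported $\lambda:\mathbf{Q}\to\mathbb{N}_0$. (GS2): for every $\gamma\in\nu(R)$ the ideal $\mathcal P_\gamma$ is generated by $\{\mathbf{Q}^\lambda\mid\nu(\mathbf{Q}^\lambda)\ge\gamma\}$. (GS3): $\{\mathrm{in}_\nu(Q)\mid Q\in\mathbf{Q}\}$ generates $\mathrm{gr}_\nu(R)$ as an $R/\mathfrak m$-algebra. *)

theory Defs
  imports "HOL-Computational_Algebra.Computational_Algebra" "HOL-Library.Extended_Real"
begin

text \<open>k[x,y] is rendered as ('a poly) poly: the inner variable is x, the outer variable is y.\<close>

definition sq_series :: "'a::field fps" where
  "sq_series = Abs_fps (\<lambda>n. if 0 < n \<and> (\<exists>i::nat. n = i^2) then 1 else 0)"

definition subst_xy :: "'a::field poly poly \<Rightarrow> 'a fps" where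
  "subst_xy p = poly (map_poly fps_of_poly p) sq_series"

definition nu :: "'a::field poly poly \<Rightarrow> ereal" where
  "nu p = (if subst_xy p = 0 then \<infinity> else ereal (real (subdegree (subst_xy p))))"

abbreviation var_x :: "'a::field poly poly" where
  "var_x \<equiv> [:[:0, 1:]:]"

definition valuation :: "('r::comm_ring_1 \<Rightarrow> ereal) \<Rightarrow> bool" where
  "valuation v \<longleftrightarrow> v 0 = \<infinity> \<and> v 1 = 0 \<and> (\<forall>f. v f \<noteq> -\<infinity>) \<and>
     (\<forall>f g. v (f * g) = v f + v g) \<and> (\<forall>f g. min (v f) (v g) \<le> v (f + g))"

definition centered :: "('r::comm_ring_1 \<Rightarrow> ereal) \<Rightarrow> bool" where
  "centered v \<longleftrightarrow> (\<forall>f. 0 \<le> v f)"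

definition vals :: "('r \<Rightarrow> ereal) \<Rightarrow> ereal set" where
  "vals v = {\<gamma>. \<exists>f. v f = \<gamma> \<and> \<gamma> \<noteq> \<infinity>}"

definition Pge :: "('r \<Rightarrow> ereal) \<Rightarrow> ereal \<Rightarrow> 'r set" where
  "Pge v \<gamma> = {f. \<gamma> \<le> v f}"

definition Pgt :: "('r \<Rightarrow> ereal) \<Rightarrow> ereal \<Rightarrow> 'r set" where
  "Pgt v \<gamma> = {f. \<gamma> < v f}"

definition gen_ideal :: "'r::comm_ring_1 set \<Rightarrow> 'r set" where
  "gen_ideal S = {x. \<exists>F c. finite F \<and> F \<subseteq> S \<and> x = (\<Sum>s\<in>F. c s * s)}"

definition Qmonomials :: "'r::comm_ring_1 set \<Rightarrow> 'r set" where
  "Qmonomials Q = {(\<Prod>q\<in>{q. lam q \<noteq> 0}. q ^ lam q) | lam :: 'r \<Rightarrow> nat.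
               finite {q. lam q \<noteq> 0} \<and> {q. lam q \<noteq> 0} \<subseteq> Q}"

definition GS2 :: "('r::comm_ring_1 \<Rightarrow> ereal) \<Rightarrow> 'r set \<Rightarrow> bool" where
  "GS2 v Q \<longleftrightarrow> (\<forall>\<gamma>\<in>vals v. Pge v \<gamma> = gen_ideal {m \<in> Qmonomials Q. \<gamma> \<le> v m})"

text \<open>An element of gr_v(R) = \<Oplus>_{\<gamma>\<in>v(R)} P_\<gamma>/P_\<gamma>^+ is a function assigning to each
  \<gamma> \<in> v(R) a coset f + P_\<gamma>^+ with f \<in> P_\<gamma> (and {} outside v(R)), almost all components zero.\<close>

definition cls :: "('r::comm_ring_1 \<Rightarrow> ereal) \<Rightarrow> ereal \<Rightarrow> 'r \<Rightarrow> 'r set" where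
  "cls v \<gamma> f = (\<lambda>g. f + g) ` Pgt v \<gamma>"

definition gr_comp :: "('r::comm_ring_1 \<Rightarrow> ereal) \<Rightarrow> ereal \<Rightarrow> 'r set set" where
  "gr_comp v \<gamma> = cls v \<gamma> ` Pge v \<gamma>"

definition gr_supp :: "('r::comm_ring_1 \<Rightarrow> ereal) \<Rightarrow> (ereal \<Rightarrow> 'r set) \<Rightarrow> ereal set" where
  "gr_supp v G = {\<gamma> \<in> vals v. G \<gamma> \<noteq> Pgt v \<gamma>}"

definition gr_carrier :: "('r::comm_ring_1 \<Rightarrow> ereal) \<Rightarrow> (ereal \<Rightarrow> 'r set) set" where
  "gr_carrier v = {G. (\<forall>\<gamma>\<in>vals v. G \<gamma> \<in> gr_comp v \<gamma>) \<and> (\<forall>\<gamma>. \<gamma> \<notin> vals v \<longrightarrow> G \<gamma> = {})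
                     \<and> finite (gr_supp v G)}"

definition rep :: "'r set \<Rightarrow> 'r" where
  "rep A = (SOME a. a \<in> A)"

definition gr_add :: "('r::comm_ring_1 \<Rightarrow> ereal) \<Rightarrow> (ereal \<Rightarrow> 'r set) \<Rightarrow> (ereal \<Rightarrow> 'r set) \<Rightarrow> (ereal \<Rightarrow> 'r set)" where
  "gr_add v G H = (\<lambda>\<gamma>. if \<gamma> \<in> vals v then cls v \<gamma> (rep (G \<gamma>) + rep (H \<gamma>)) else {})"

definition gr_mult :: "('r::comm_ring_1 \<Rightarrow> ereal) \<Rightarrow> (ereal \<Rightarrow> 'r set) \<Rightarrow> (ereal \<Rightarrow> 'r set) \<Rightarrow> (ereal \<Rightarrow> 'r set)" where
  "gr_mult v G H = (\<lambda>\<gamma>. if \<gamma> \<in> vals v then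
      cls v \<gamma> (\<Sum>(\<alpha>, \<beta>) \<in> {(\<alpha>, \<beta>). \<alpha> \<in> gr_supp v G \<and> \<beta> \<in> gr_supp v H \<and> \<alpha> + \<beta> = \<gamma>}.
                  rep (G \<alpha>) * rep (H \<beta>))
    else {})"

text \<open>Scalar action of R (it factors through R/m when v is centered).\<close>
definition gr_smult :: "('r::comm_ring_1 \<Rightarrow> ereal) \<Rightarrow> 'r \<Rightarrow> (ereal \<Rightarrow> 'r set) \<Rightarrow> (ereal \<Rightarrow> 'r set)" where
  "gr_smult v c G = (\<lambda>\<gamma>. if \<gamma> \<in> vals v then cls v \<gamma> (c * rep (G \<gamma>)) else {})"

definition gr_one :: "('r::comm_ring_1 \<Rightarrow> ereal) \<Rightarrow> (ereal \<Rightarrow> 'r set)" where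
  "gr_one v = (\<lambda>\<gamma>. if \<gamma> \<in> vals v then cls v \<gamma> (if \<gamma> = 0 then 1 else 0) else {})"

text \<open>Initial form in_v(f): the class of f in P_{v f}/P_{v f}^+ (zero if f has value \<infinity>).\<close>
definition in_v :: "('r::comm_ring_1 \<Rightarrow> ereal) \<Rightarrow> 'r \<Rightarrow> (ereal \<Rightarrow> 'r set)" where
  "in_v v f = (\<lambda>\<gamma>. if \<gamma> \<in> vals v then cls v \<gamma> (if \<gamma> = v f then f else 0) else {})"

text \<open>Subalgebra of gr_v(R) generated (over R/m, i.e. via the R-action) by a set S.\<close>
inductive_set gen_alg :: "('r::comm_ring_1 \<Rightarrow> ereal) \<Rightarrow> (ereal \<Rightarrow> 'r set) set \<Rightarrow> (ereal \<Rightarrow> 'r set) set"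
  for v S where
  one: "gr_one v \<in> gen_alg v S"
| gen: "G \<in> S \<Longrightarrow> G \<in> gen_alg v S"
| smult: "G \<in> gen_alg v S \<Longrightarrow> gr_smult v c G \<in> gen_alg v S"
| add: "G \<in> gen_alg v S \<Longrightarrow> H \<in> gen_alg v S \<Longrightarrow> gr_add v G H \<in> gen_alg v S"
| mult: "G \<in> gen_alg v S \<Longrightarrow> H \<in> gen_alg v S \<Longrightarrow> gr_mult v G H \<in> gen_alg v S"

definition GS3 :: "('r::comm_ring_1 \<Rightarrow> ereal) \<Rightarrow> 'r set \<Rightarrow> bool" where
  "GS3 v Q \<longleftrightarrow> gr_carrier v \<subseteq> gen_alg v (in_v v ` Q)"

end

theory Submission
  imports Defs
begin


lemma mp_add: "map_poly fps_of_poly (p + q) = map_poly fps_of_poly p + map_poly fps_of_poly q"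
  by (intro poly_eqI) (simp add: coeff_map_poly fps_of_poly_add)
lemma mp_uminus: "map_poly fps_of_poly (- p) = - map_poly fps_of_poly p"
  by (intro poly_eqI) (simp add: coeff_map_poly fps_of_poly_uminus)
lemma mp_mult: "map_poly fps_of_poly (p * q) = map_poly fps_of_poly p * map_poly fps_of_poly q"
  by (intro poly_eqI) (simp add: coeff_map_poly coeff_mult fps_of_poly_sum fps_of_poly_mult)

lemma S_add: "subst_xy (p + q) = subst_xy p + subst_xy q"
  by (simp add: subst_xy_def mp_add)
lemma S_uminus: "subst_xy (- p) = - subst_xy p"
  by (simp add: subst_xy_def mp_uminus)
lemma S_diff: "subst_xy (p - q) = subst_xy p - subst_xy q"
  using S_add[of p "-q"] S_uminus[of q] by simp
lemma S_mult: "subst_xy (p * q) = subst_xy p * subst_xy q"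
  by (simp add: subst_xy_def mp_mult)
lemma S_0: "subst_xy 0 = 0" by (simp add: subst_xy_def)
lemma S_1: "subst_xy 1 = 1" by (simp add: subst_xy_def)
lemma S_const: "subst_xy [:[:c:]:] = fps_const c"
  by (simp add: subst_xy_def fps_of_poly_const map_poly_pCons)
lemma S_x: "subst_xy (var_x :: 'a::field poly poly) = fps_X"
  by (simp add: subst_xy_def map_poly_pCons)
lemma S_pow: "subst_xy (p ^ n) = subst_xy p ^ n"
  by (induction n) (simp_all add: S_1 S_mult)
lemma S_y: "subst_xy ([:0, 1:] :: 'a::field poly poly) = sq_series"
  by (simp add: subst_xy_def map_poly_pCons)

definition Pz :: "nat \<Rightarrow> 'a::field poly poly set" where
  "Pz m = {p. \<forall>i<m. subst_xy p $ i = 0}"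

lemma nu_ge: "ereal (real n) \<le> nu p \<longleftrightarrow> p \<in> Pz n"
proof (cases "subst_xy p = 0")
  case True then show ?thesis by (simp add: nu_def Pz_def)
next
  case False
  have "n \<le> subdegree (subst_xy p) \<longleftrightarrow> (\<forall>i<n. subst_xy p $ i = 0)"
    using False subdegree_geI[of "subst_xy p" n] nth_less_subdegree_zero[of _ "subst_xy p"]
      nth_subdegree_nonzero[OF False] by (meson leI less_le_trans)
  then show ?thesis using False by (simp add: nu_def Pz_def)
qed

lemma nu_gt: "ereal (real n) < nu p \<longleftrightarrow> p \<in> Pz (Suc n)"
proof (cases "subst_xy p = 0")
  case True then show ?thesis by (simp add: nu_def Pz_def)
next
  case False
  have "Suc n \<le> subdegree (subst_xy p) \<longleftrightarrow> (\<forall>i<Suc n. subst_xy p $ i = 0)"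
    using False subdegree_geI[of "subst_xy p" "Suc n"] nth_less_subdegree_zero[of _ "subst_xy p"]
      nth_subdegree_nonzero[OF False] by (meson leI less_le_trans)
  then show ?thesis using False by (simp add: nu_def Pz_def Suc_le_eq)
qed

lemma Pz_add: "p \<in> Pz m \<Longrightarrow> q \<in> Pz m \<Longrightarrow> p + q \<in> Pz m"
  by (simp add: Pz_def S_add)
lemma Pz_uminus: "p \<in> Pz m \<Longrightarrow> - p \<in> Pz m"
  by (simp add: Pz_def S_uminus)
lemma Pz_diff: "p \<in> Pz m \<Longrightarrow> q \<in> Pz m \<Longrightarrow> p - q \<in> Pz m"
  by (simp add: Pz_def S_diff)
lemma Pz_0: "0 \<in> Pz m"
  by (simp add: Pz_def S_0)
lemma Pz_mono: "p \<in> Pz m \<Longrightarrow> k \<le> m \<Longrightarrow> p \<in> Pz k"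
  by (simp add: Pz_def)
lemma Pz_zero: "p \<in> Pz 0"
  by (simp add: Pz_def)
lemma Pz_mult: "p \<in> Pz m \<Longrightarrow> q \<in> Pz k \<Longrightarrow> p * q \<in> Pz (m + k)"
proof -
  assume p: "p \<in> Pz m" and q: "q \<in> Pz k"
  show ?thesis
  proof (cases "subst_xy p = 0 \<or> subst_xy q = 0")
    case True then show ?thesis by (auto simp: Pz_def S_mult)
  next
    case False
    then have a: "subst_xy p \<noteq> 0" "subst_xy q \<noteq> 0" by auto
    have "m \<le> subdegree (subst_xy p)" using p a subdegree_geI unfolding Pz_def by blast
    moreover have "k \<le> subdegree (subst_xy q)" using q a subdegree_geI unfolding Pz_def by blast
    ultimately have "m + k \<le> subdegree (subst_xy p * subst_xy q)" using a by simp
    then show ?thesis unfolding Pz_def S_mult using nth_less_subdegree_zero[of _ "subst_xy p * subst_xy q"] by (simp add: S_mult)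
  qed
qed
lemma Pz_xpow: "(var_x :: 'a::field poly poly) ^ n \<in> Pz n"
  by (simp add: Pz_def S_pow S_x fps_X_power_nth)

lemma valuation_nu: "valuation (nu :: 'a::field poly poly \<Rightarrow> ereal)"
  unfolding valuation_def
proof (intro conjI allI)
  show "nu (0::'a poly poly) = \<infinity>" by (simp add: nu_def S_0)
  show "nu (1::'a poly poly) = 0" by (simp add: nu_def S_1)
  fix f :: "'a poly poly"
  show "nu f \<noteq> - \<infinity>" by (simp add: nu_def)
  fix g :: "'a poly poly"
  show "nu (f * g) = nu f + nu g"
    by (cases "subst_xy f = 0"; cases "subst_xy g = 0") (simp_all add: nu_def S_mult)
  show "min (nu f) (nu g) \<le> nu (f + g)"
  proof (cases "subst_xy (f + g) = 0")
    case True then show ?thesis by (simp add: nu_def)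
  next
    case fg: False
    show ?thesis
    proof (cases "subst_xy f = 0")
      case True then show ?thesis using fg by (simp add: nu_def S_add)
    next
      case f: False
      show ?thesis
      proof (cases "subst_xy g = 0")
        case True then show ?thesis using fg by (simp add: nu_def S_add)
      next
        case g: False
        have "min (subdegree (subst_xy f)) (subdegree (subst_xy g)) \<le> subdegree (subst_xy (f + g))"
          using subdegree_add_ge'[of "subst_xy f" "subst_xy g"] fg by (simp add: S_add)
        then show ?thesis using f g fg by (simp add: nu_def min_def split: if_splits)
      qed
    qed
  qed
qed

lemma centered_nu: "centered (nu :: 'a::field poly poly \<Rightarrow> ereal)"
  by (simp add: centered_def nu_def)



lemma nu_xpow: "nu ((var_x :: 'a::field poly poly) ^ n) = ereal (real n)"
  by (simp add: nu_def S_pow S_x)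

lemma in_vals: "ereal (real n) \<in> vals (nu :: 'a::field poly poly \<Rightarrow> ereal)"
  unfolding vals_def using nu_xpow[where 'a='a, of n] by (intro CollectI exI[of _ "var_x ^ n"]) simp

lemma vals_nu: "\<gamma> \<in> vals (nu :: 'a::field poly poly \<Rightarrow> ereal) \<longleftrightarrow> (\<exists>n. \<gamma> = ereal (real n))"
proof
  assume "\<gamma> \<in> vals (nu :: 'a::field poly poly \<Rightarrow> ereal)"
  then obtain f :: "'a poly poly" where "nu f = \<gamma>" "\<gamma> \<noteq> \<infinity>" unfolding vals_def by blast
  then show "\<exists>n. \<gamma> = ereal (real n)" unfolding nu_def by (auto split: if_splits)
next
  assume "\<exists>n. \<gamma> = ereal (real n)"
  then show "\<gamma> \<in> vals (nu :: 'a::field poly poly \<Rightarrow> ereal)" using in_vals by blast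
qed

lemma sq0: "(sq_series :: 'a::field fps) $ 0 = 0" by (simp add: sq_series_def)
lemma sq1: "(sq_series :: 'a::field fps) $ 1 = 1"
proof -
  have "\<exists>i::nat. (1::nat) = i^2" by (rule exI[of _ 1]) simp
  then show ?thesis unfolding sq_series_def by simp
qed

lemma ymx: "([:0, 1:] - var_x :: 'a::field poly poly) \<in> Pz 2"
proof -
  have "subst_xy ([:0, 1:] - var_x :: 'a::field poly poly) = sq_series - fps_X"
    by (simp only: S_diff S_y S_x)
  moreover have "(sq_series - fps_X :: 'a fps) $ i = 0" if "i < 2" for i
  proof -
    have "i = 0 \<or> i = 1" using that by arith
    then show ?thesis using sq0[where 'a='a] sq1[where 'a='a] by auto
  qed
  ultimately show ?thesis unfolding Pz_def by simp
qed

lemma qmon_dvd: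
  assumes "s \<in> Qmonomials {var_x :: 'a::field poly poly}" "ereal (real 2) \<le> nu s"
  shows "var_x dvd s"
proof -
  obtain lam :: "'a poly poly \<Rightarrow> nat" where s: "s = (\<Prod>q\<in>{q. lam q \<noteq> 0}. q ^ lam q)"
     and sub: "{q. lam q \<noteq> 0} \<subseteq> {var_x}"
    using assms(1) unfolding Qmonomials_def by blast
  show ?thesis
  proof (cases "lam var_x = 0")
    case True
    then have "{q. lam q \<noteq> 0} = {}" using sub by auto
    then have "s = 1" using s by simp
    then show ?thesis using assms(2) by (simp add: nu_def S_1)
  next
    case False
    then have "{q. lam q \<noteq> 0} = {var_x}" using sub by auto
    then have "s = var_x ^ lam var_x" using s by simp
    then show ?thesis using False by (simp add: dvd_power)
  qed
qed

lemma not_GS2: "\<not> GS2 (nu :: 'a::field poly poly \<Rightarrow> ereal) {var_x}"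
proof
  define M where "M = {m \<in> Qmonomials {var_x :: 'a poly poly}. ereal (real 2) \<le> nu m}"
  assume "GS2 (nu :: 'a::field poly poly \<Rightarrow> ereal) {var_x}"
  then have eq: "Pge nu (ereal (real 2)) = gen_ideal M"
    unfolding GS2_def M_def using in_vals[where 'a='a, of 2] by blast
  have "([:0, 1:] - var_x :: 'a::field poly poly) \<in> Pge nu (ereal (real 2))"
    unfolding Pge_def using ymx nu_ge by blast
  then have "([:0, 1:] - var_x :: 'a::field poly poly) \<in> gen_ideal M" using eq by simp
  then obtain F c where F: "finite F" "F \<subseteq> M"
    and e: "([:0, 1:] - var_x :: 'a::field poly poly) = (\<Sum>s\<in>F. c s * s)"
    unfolding gen_ideal_def by blast
  have "var_x dvd (c s * s)" if "s \<in> F" for s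
  proof -
    have "s \<in> Qmonomials {var_x}" "ereal (real 2) \<le> nu s" using F(2) that unfolding M_def by auto
    then have "var_x dvd s" by (rule qmon_dvd)
    then show ?thesis by (rule dvd_mult)
  qed
  then have "var_x dvd (\<Sum>s\<in>F. c s * s)" by (rule dvd_sum)
  then have h: "var_x dvd ([:0, 1:] - var_x :: 'a::field poly poly)" using e by simp
  have "([:0, 1:] :: 'a::field poly poly) = ([:0, 1:] - var_x) + var_x" by simp
  then have "var_x dvd ([:0, 1:] :: 'a::field poly poly)"
    using dvd_add[OF h dvd_refl] by simp
  then have "[:0, 1::'a:] dvd coeff ([:0, 1:] :: 'a::field poly poly) 1"
    using const_poly_dvd_iff by blast
  then have "[:0, 1::'a:] dvd 1" by simp
  then obtain k where "1 = [:0, 1::'a:] * k" by (auto elim: dvdE)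
  then have "coeff (1::'a poly) 0 = coeff ([:0, 1::'a:] * k) 0" by simp
  then show False by (simp add: coeff_mult_0)
qed



abbreviation NU :: "'a::field poly poly \<Rightarrow> ereal" where "NU \<equiv> nu"

lemma Pge_E: "Pge NU (ereal (real n)) = Pz n" by (auto simp: Pge_def nu_ge)
lemma Pgt_E: "Pgt NU (ereal (real n)) = Pz (Suc n)" by (auto simp: Pgt_def nu_gt)

lemma img_sub: "a - b \<in> Pz m \<Longrightarrow> (\<lambda>g. a + g) ` Pz m \<subseteq> (\<lambda>g. b + g) ` Pz m"
proof
  fix x assume ab: "a - b \<in> Pz m" and "x \<in> (\<lambda>g. a + g) ` Pz m"
  then obtain g where g: "g \<in> Pz m" "x = a + g" by blast
  then have "a - b + g \<in> Pz m" using ab by (intro Pz_add)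
  moreover have "x = b + (a - b + g)" using g by (simp add: algebra_simps)
  ultimately show "x \<in> (\<lambda>g. b + g) ` Pz m" by blast
qed

lemma cls_E: "cls NU (ereal (real n)) a = (\<lambda>g. a + g) ` Pz (Suc n)"
  by (simp add: cls_def Pgt_E)

lemma cls_eq: "a - b \<in> Pz (Suc n) \<Longrightarrow> cls NU (ereal (real n)) a = cls NU (ereal (real n)) b"
proof -
  assume h: "a - b \<in> Pz (Suc n)"
  then have "b - a \<in> Pz (Suc n)" using Pz_uminus[OF h] by simp
  then show ?thesis unfolding cls_E using img_sub[OF h] img_sub[of b a] by blast
qed

lemma rep_cls: "rep (cls NU (ereal (real n)) a) - a \<in> Pz (Suc n)"
proof -
  have "a \<in> cls NU (ereal (real n)) a" unfolding cls_E using Pz_0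
    by (metis add.right_neutral image_eqI)
  then have "rep (cls NU (ereal (real n)) a) \<in> cls NU (ereal (real n)) a"
    unfolding rep_def by (rule someI)
  then obtain g where "g \<in> Pz (Suc n)" "rep (cls NU (ereal (real n)) a) = a + g"
    unfolding cls_E by blast
  then show ?thesis by simp
qed

lemma Pgt_cls0: "Pgt NU (ereal (real n)) = cls NU (ereal (real n)) 0"
  by (simp add: cls_E Pgt_E)

lemma cls_Pgt_iff: "cls NU (ereal (real n)) a = Pgt NU (ereal (real n)) \<longleftrightarrow> a \<in> Pz (Suc n)"
proof
  assume h: "cls NU (ereal (real n)) a = Pgt NU (ereal (real n))"
  have "a \<in> cls NU (ereal (real n)) a" unfolding cls_E using Pz_0
    by (metis add.right_neutral image_eqI)
  then show "a \<in> Pz (Suc n)" using h by (simp add: Pgt_E)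
next
  assume "a \<in> Pz (Suc n)"
  then show "cls NU (ereal (real n)) a = Pgt NU (ereal (real n))"
    unfolding Pgt_cls0 by (intro cls_eq) simp
qed

lemma add_cls: "rep A - a \<in> Pz (Suc k) \<Longrightarrow> rep B - b \<in> Pz (Suc k) \<Longrightarrow>
   cls NU (ereal (real k)) (rep A + rep B) = cls NU (ereal (real k)) (a + b)"
proof -
  assume "rep A - a \<in> Pz (Suc k)" "rep B - b \<in> Pz (Suc k)"
  then have "(rep A - a) + (rep B - b) \<in> Pz (Suc k)" by (rule Pz_add)
  then show ?thesis by (intro cls_eq) (simp add: algebra_simps)
qed

lemma carrier_comp:
  assumes "G \<in> gr_carrier NU"
  obtains g where "g \<in> Pz n" "G (ereal (real n)) = cls NU (ereal (real n)) g"
proof -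
  have "G (ereal (real n)) \<in> gr_comp NU (ereal (real n))"
    using assms in_vals unfolding gr_carrier_def by blast
  then show ?thesis using that unfolding gr_comp_def Pge_E by blast
qed

lemma ereal_nat_eq: "ereal (real m) = ereal (real n) \<longleftrightarrow> m = n" by simp

lemma in_v_E: "nu f = ereal (real m) \<Longrightarrow>
   in_v NU f (ereal (real n)) = cls NU (ereal (real n)) (if n = m then f else 0)"
  by (simp add: in_v_def in_vals)

lemma supp_in_v:
  fixes f :: "'a::field poly poly"
  assumes "nu f = ereal (real m)"
  shows "gr_supp NU (in_v NU f) = {ereal (real m)}"
proof -
  have "f \<notin> Pz (Suc m)" using assms nu_gt[of m f] by simp
  have "\<gamma> \<in> gr_supp NU (in_v NU f) \<longleftrightarrow> \<gamma> = ereal (real m)" for \<gamma>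
  proof (cases "\<gamma> \<in> vals (NU :: 'a poly poly \<Rightarrow> ereal)")
    case True
    then obtain n where n: "\<gamma> = ereal (real n)" using vals_nu by blast
    have "\<gamma> \<in> gr_supp NU (in_v NU f) \<longleftrightarrow> (if n = m then f else 0) \<notin> Pz (Suc n)"
      unfolding gr_supp_def using True n in_v_E[OF assms, of n] by (simp add: cls_Pgt_iff in_vals)
    also have "\<dots> \<longleftrightarrow> n = m" using \<open>f \<notin> Pz (Suc m)\<close> Pz_0 by auto
    finally show ?thesis using n by simp
  next
    case False
    moreover have "ereal (real m) \<in> vals (NU :: 'a poly poly \<Rightarrow> ereal)" by (rule in_vals)
    ultimately show ?thesis unfolding gr_supp_def by auto
  qed
  then show ?thesis by blast
qed



lemma x_pow1: "(var_x :: 'a::field poly poly) = var_x ^ 1" by simp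

lemma mult_step:
  "gr_mult NU (in_v NU ((var_x :: 'a::field poly poly) ^ n)) (in_v NU (var_x ^ 1)) = in_v NU (var_x ^ Suc n)"
proof (rule ext)
  fix \<gamma>
  show "gr_mult NU (in_v NU ((var_x :: 'a::field poly poly) ^ n)) (in_v NU (var_x ^ 1)) \<gamma> = in_v NU (var_x ^ Suc n) \<gamma>"
  proof (cases "\<gamma> \<in> vals (NU :: 'a poly poly \<Rightarrow> ereal)")
    case False then show ?thesis by (simp add: gr_mult_def in_v_def)
  next
    case True
    then obtain k where k: "\<gamma> = ereal (real k)" using vals_nu by blast
    have s1: "gr_supp NU (in_v NU ((var_x :: 'a::field poly poly) ^ n)) = {ereal (real n)}"
      by (rule supp_in_v) (rule nu_xpow)
    have s2: "gr_supp NU (in_v NU ((var_x :: 'a::field poly poly) ^ 1)) = {ereal (real 1)}"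
      by (rule supp_in_v) (rule nu_xpow)
    have addE: "ereal (real n) + ereal (real 1) = ereal (real (Suc n))" by simp
    show ?thesis
    proof (cases "k = Suc n")
      case True
      have set: "{(\<alpha>, \<beta>). \<alpha> \<in> {ereal (real n)} \<and> \<beta> \<in> {ereal (real 1)} \<and> \<alpha> + \<beta> = \<gamma>}
          = {(ereal (real n), ereal (real 1))}" using True k addE by auto
      define r1 where "r1 = rep (in_v NU ((var_x :: 'a::field poly poly) ^ n) (ereal (real n)))"
      define r2 where "r2 = rep (in_v NU ((var_x :: 'a::field poly poly) ^ 1) (ereal (real 1)))"
      have p: "r1 - var_x ^ n \<in> Pz (Suc n)"
        unfolding r1_def in_v_E[OF nu_xpow] using rep_cls by simp
      have q: "r2 - var_x \<in> Pz (Suc 1)"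
        unfolding r2_def in_v_E[OF nu_xpow] using rep_cls[of 1 "var_x ^ 1"] by simp
      define p' where "p' = r1 - var_x ^ n"
      define q' where "q' = r2 - var_x"
      have eq: "r1 * r2 - var_x ^ Suc n = var_x ^ n * q' + p' * var_x + p' * q'"
        unfolding p'_def q'_def by (simp add: algebra_simps)
      have "var_x ^ n * q' \<in> Pz (n + Suc 1)" using Pz_mult[OF Pz_xpow q[folded q'_def]] .
      then have a1: "var_x ^ n * q' \<in> Pz (Suc (Suc n))" by simp
      have "p' * var_x \<in> Pz (Suc n + 1)" using Pz_mult[OF p[folded p'_def] Pz_xpow[of 1]] by simp
      then have a2: "p' * var_x \<in> Pz (Suc (Suc n))" by simp
      have "p' * q' \<in> Pz (Suc n + Suc 1)" using Pz_mult[OF p[folded p'_def] q[folded q'_def]] .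
      then have a3: "p' * q' \<in> Pz (Suc (Suc n))" by (rule Pz_mono) simp
      have d: "r1 * r2 - var_x ^ Suc n \<in> Pz (Suc (Suc n))"
        unfolding eq by (intro Pz_add a1 a2 a3)
      have "gr_mult NU (in_v NU ((var_x :: 'a::field poly poly) ^ n)) (in_v NU (var_x ^ 1)) \<gamma>
          = cls NU (ereal (real (Suc n))) (r1 * r2)"
        unfolding gr_mult_def s1 s2 set using True k \<open>\<gamma> \<in> vals NU\<close> by (simp add: r1_def r2_def)
      also have "\<dots> = cls NU (ereal (real (Suc n))) (var_x ^ Suc n)"
        using d by (rule cls_eq)
      also have "\<dots> = in_v NU (var_x ^ Suc n) \<gamma>"
        using in_v_E[OF nu_xpow[where 'a='a], of "Suc n" "Suc n"] True k by simp
      finally show ?thesis .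
    next
      case False
      have set: "{(\<alpha>, \<beta>). \<alpha> \<in> {ereal (real n)} \<and> \<beta> \<in> {ereal (real 1)} \<and> \<alpha> + \<beta> = \<gamma>} = {}"
        using False k addE by auto
      have "gr_mult NU (in_v NU ((var_x :: 'a::field poly poly) ^ n)) (in_v NU (var_x ^ 1)) \<gamma>
          = cls NU (ereal (real k)) 0"
        unfolding gr_mult_def s1 s2 set using k \<open>\<gamma> \<in> vals NU\<close> by simp
      also have "\<dots> = in_v NU (var_x ^ Suc n) \<gamma>"
        using in_v_E[OF nu_xpow[where 'a='a], of "Suc n" k] False k by simp
      finally show ?thesis .
    qed
  qed
qed

lemma xpow_gen: "in_v NU ((var_x :: 'a::field poly poly) ^ n) \<in> gen_alg NU (in_v NU ` {var_x})"
proof (induction n)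
  case 0
  have "in_v NU ((var_x :: 'a::field poly poly) ^ 0) = gr_one NU"
    by (simp add: in_v_def gr_one_def nu_def S_1 fun_eq_iff)
  then show ?case by (simp add: gen_alg.one)
next
  case (Suc n)
  have "in_v NU ((var_x :: 'a::field poly poly) ^ 1) \<in> gen_alg NU (in_v NU ` {var_x})"
    by (simp add: gen_alg.gen)
  from gen_alg.mult[OF Suc this] show ?case by (simp only: mult_step)
qed



lemma zero_gen: "(\<lambda>\<gamma>. if \<gamma> \<in> vals (NU :: 'a::field poly poly \<Rightarrow> ereal) then Pgt NU \<gamma> else {}) \<in> gen_alg NU (in_v NU ` {var_x :: 'a::field poly poly})"
proof -
  have eq: "gr_smult NU 0 (gr_one NU) = (\<lambda>\<gamma>. if \<gamma> \<in> vals (NU :: 'a::field poly poly \<Rightarrow> ereal) then Pgt NU \<gamma> else {})"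
    unfolding fun_eq_iff gr_smult_def by (auto simp: vals_nu Pgt_cls0)
  have "gr_smult NU 0 (gr_one NU) \<in> gen_alg NU (in_v NU ` {var_x :: 'a::field poly poly})"
    by (intro gen_alg.smult gen_alg.one)
  then show ?thesis by (simp only: eq)
qed

lemma smult_val:
  "gr_smult NU [:[:c:]:] (in_v NU ((var_x :: 'a::field poly poly) ^ n)) (ereal (real k))
     = cls NU (ereal (real k)) (if k = n then [:[:c:]:] * var_x ^ n else 0)"
proof -
  define a :: "'a poly poly" where "a = (if k = n then var_x ^ n else 0)"
  define r where "r = rep (in_v NU ((var_x :: 'a::field poly poly) ^ n) (ereal (real k)))"
  have "r - a \<in> Pz (Suc k)" unfolding r_def a_def in_v_E[OF nu_xpow] by (rule rep_cls)
  then have "[:[:c:]:] * (r - a) \<in> Pz (0 + Suc k)" by (intro Pz_mult Pz_zero)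
  then have "[:[:c:]:] * r - [:[:c:]:] * a \<in> Pz (Suc k)" by (simp only: right_diff_distrib add_0_left)
  then have "cls NU (ereal (real k)) ([:[:c:]:] * r) = cls NU (ereal (real k)) ([:[:c:]:] * a)"
    by (rule cls_eq)
  then show ?thesis unfolding gr_smult_def r_def[symmetric] using in_vals[where 'a='a, of k]
    by (simp add: a_def)
qed

lemma coeff_step:
  assumes "g \<in> Pz n"
  shows "g - [:[:subst_xy g $ n:]:] * (var_x :: 'a::field poly poly) ^ n \<in> Pz (Suc n)"
proof -
  have "subst_xy (g - [:[:subst_xy g $ n:]:] * (var_x :: 'a::field poly poly) ^ n)
        = subst_xy g - fps_const (subst_xy g $ n) * fps_X ^ n"
    by (simp only: S_diff S_mult S_const S_pow S_x)
  then show ?thesis using assms unfolding Pz_def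
    by (auto simp: fps_X_power_nth less_Suc_eq)
qed

lemma carrier_gen:
  assumes "finite S"
  shows "\<forall>G \<in> gr_carrier NU. gr_supp NU G \<subseteq> S \<longrightarrow> G \<in> gen_alg NU (in_v NU ` {var_x :: 'a::field poly poly})"
  using assms
proof (induction S rule: finite_induct)
  case empty
  show ?case
  proof (intro ballI impI)
    fix G :: "ereal \<Rightarrow> 'a poly poly set"
    assume G: "G \<in> gr_carrier NU" "gr_supp NU G \<subseteq> {}"
    have "G = (\<lambda>\<gamma>. if \<gamma> \<in> vals (NU :: 'a::field poly poly \<Rightarrow> ereal) then Pgt NU \<gamma> else {})"
    proof (rule ext)
      fix \<gamma> show "G \<gamma> = (if \<gamma> \<in> vals (NU :: 'a::field poly poly \<Rightarrow> ereal) then Pgt NU \<gamma> else {})"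
        using G unfolding gr_carrier_def gr_supp_def by auto
    qed
    then show "G \<in> gen_alg NU (in_v NU ` {var_x :: 'a::field poly poly})" using zero_gen by simp
  qed
next
  case (insert \<gamma>0 S)
  show ?case
  proof (intro ballI impI)
    fix G :: "ereal \<Rightarrow> 'a poly poly set"
    assume G: "G \<in> gr_carrier NU" and sG: "gr_supp NU G \<subseteq> insert \<gamma>0 S"
    show "G \<in> gen_alg NU (in_v NU ` {var_x :: 'a::field poly poly})"
    proof (cases "\<gamma>0 \<in> vals (NU :: 'a poly poly \<Rightarrow> ereal)")
      case False
      then have "gr_supp NU G \<subseteq> S" using sG unfolding gr_supp_def by auto
      then show ?thesis using insert.IH G by blast
    next
      case True
      then obtain n where n: "\<gamma>0 = ereal (real n)" using vals_nu by blast
      obtain g where g: "g \<in> Pz n" "G (ereal (real n)) = cls NU (ereal (real n)) g"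
        using carrier_comp[OF G] by blast
      define c where "c = subst_xy g $ n"
      define G' where "G' = G(ereal (real n) := Pgt NU (ereal (real n)))"
      define H where "H = gr_smult NU [:[:c:]:] (in_v NU ((var_x :: 'a::field poly poly) ^ n))"
      have H: "H \<in> gen_alg NU (in_v NU ` {var_x :: 'a::field poly poly})"
        unfolding H_def by (intro gen_alg.smult xpow_gen)
      have suppG': "gr_supp NU G' \<subseteq> gr_supp NU G - {ereal (real n)}"
        unfolding G'_def gr_supp_def by auto
      have G'c: "G' \<in> gr_carrier NU"
        unfolding gr_carrier_def
      proof (intro CollectI conjI ballI allI impI)
        fix \<gamma> assume "\<gamma> \<in> vals (NU :: 'a poly poly \<Rightarrow> ereal)"
        then show "G' \<gamma> \<in> gr_comp NU \<gamma>"
          using G Pz_0 unfolding G'_def gr_carrier_def gr_comp_def Pge_E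
          by (auto simp: Pgt_cls0 Pge_E)
      next
        fix \<gamma> assume "\<gamma> \<notin> vals (NU :: 'a poly poly \<Rightarrow> ereal)"
        then show "G' \<gamma> = {}" using G True n unfolding G'_def gr_carrier_def by auto
      next
        show "finite (gr_supp NU G')"
        proof -
          have fin: "finite (gr_supp NU G)" using G unfolding gr_carrier_def by blast
          show ?thesis by (rule finite_subset[OF suppG' finite_Diff[OF fin]])
        qed
      qed
      have "gr_supp NU G' \<subseteq> S" using suppG' sG n by auto
      then have G'g: "G' \<in> gen_alg NU (in_v NU ` {var_x :: 'a::field poly poly})"
        using insert.IH G'c by blast
      have "G = gr_add NU G' H"
      proof (rule ext)
        fix \<gamma>
        show "G \<gamma> = gr_add NU G' H \<gamma>"
        proof (cases "\<gamma> \<in> vals (NU :: 'a poly poly \<Rightarrow> ereal)")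
          case False
          then show ?thesis using G unfolding gr_carrier_def gr_add_def by auto
        next
          case vk: True
          then obtain k where k: "\<gamma> = ereal (real k)" using vals_nu by blast
          have Hk: "H \<gamma> = cls NU (ereal (real k)) (if k = n then [:[:c:]:] * var_x ^ n else 0)"
            unfolding H_def k by (rule smult_val)
          show ?thesis
          proof (cases "k = n")
            case True
            have G'k: "G' \<gamma> = cls NU (ereal (real k)) 0" using True k by (simp add: G'_def Pgt_cls0)
            have Hk': "H \<gamma> = cls NU (ereal (real k)) ([:[:c:]:] * var_x ^ n)" using Hk True by simp
            have "gr_add NU G' H \<gamma> = cls NU (ereal (real k)) (rep (G' \<gamma>) + rep (H \<gamma>))"
              unfolding gr_add_def using vk k by simp
            also have "\<dots> = cls NU (ereal (real k)) (0 + [:[:c:]:] * var_x ^ n)"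
              unfolding G'k Hk' by (rule add_cls[OF rep_cls rep_cls])
            also have "\<dots> = cls NU (ereal (real k)) g"
              using coeff_step[OF g(1)] True by (intro cls_eq[symmetric]) (simp add: c_def)
            finally show ?thesis using g True k by simp
          next
            case False
            obtain a where a: "a \<in> Pz k" "G (ereal (real k)) = cls NU (ereal (real k)) a"
              using carrier_comp[OF G] by blast
            have G'k: "G' \<gamma> = cls NU (ereal (real k)) a" using False k a by (simp add: G'_def)
            have Hk': "H \<gamma> = cls NU (ereal (real k)) 0" using Hk False by simp
            have "gr_add NU G' H \<gamma> = cls NU (ereal (real k)) (rep (G' \<gamma>) + rep (H \<gamma>))"
              unfolding gr_add_def using vk k by simp
            also have "\<dots> = cls NU (ereal (real k)) (a + 0)"
              unfolding G'k Hk' by (rule add_cls[OF rep_cls rep_cls])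
            finally have "gr_add NU G' H \<gamma> = cls NU (ereal (real k)) (a + 0)" .
            then show ?thesis using a k by simp
          qed
        qed
      qed
      then show ?thesis using gen_alg.add[OF G'g H] by simp
    qed
  qed
qed

lemma GS3_nu: "GS3 (nu :: 'a::field poly poly \<Rightarrow> ereal) {var_x}"
  unfolding GS3_def
proof
  fix G assume G: "G \<in> gr_carrier (nu :: 'a::field poly poly \<Rightarrow> ereal)"
  then have "finite (gr_supp NU G)" unfolding gr_carrier_def by blast
  then show "G \<in> gen_alg NU (in_v NU ` {var_x :: 'a::field poly poly})"
    using carrier_gen G by blast
qed

theorem mainTheorem2:
  "valuation (nu :: 'a::field poly poly \<Rightarrow> ereal) \<and> centered (nu :: 'a poly poly \<Rightarrow> ereal)
   \<and> GS3 (nu :: 'a poly poly \<Rightarrow> ereal) {var_x} \<and> \<not> GS2 (nu :: 'a poly poly \<Rightarrow> ereal) {var_x}"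
  using valuation_nu centered_nu GS3_nu not_GS2 by blast

end
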